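(* Let $K$ be a differential field of characteristic $0$ and let $M$ be a differential module over $K$ of dimension $4$ with $\det M=\mathbf{1}$. Then $M$ is isomorphic to $A\otimes B$ for differential modules $A,B$ of dimension $2$ with $\det A=\det B=\mathbf{1}$ if and only if there exists $F\in\mathrm{sym}^2M$ with $\partial F=0$ such that $F$ is non degenerate and has an isotropic subspace of dimension $2$.
   Context: A differential module over $K$ is a finite-dimensional $K$-vector space with an additive map $\partial$ satisfying the Leibniz rule; $\mathrm{sym}^2M$ and tensor products carry the induced derivations, $\det M=\Lambda^{\dim M}M$, and $\mathbf{1}$ is the trivial one-dimensional module. An element $F\in\mathrm{sym}^2M$ defines a symmetric bilinear form $(a,b)=F(a\otimes b)$ on $M^*$; non degenerate and (totally) isotropic subspace refer to this form. *)

theory Defs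
  imports "HOL-Analysis.Analysis"
begin

definition derivation :: "('k::field \<Rightarrow> 'k) \<Rightarrow> bool" where
  "derivation D \<longleftrightarrow> (\<forall>a b. D (a + b) = D a + D b) \<and> (\<forall>a b. D (a * b) = D a * b + a * D b)"

definition diff_module :: "('k::field \<Rightarrow> 'k) \<Rightarrow> ('k^'n \<Rightarrow> 'k^'n) \<Rightarrow> bool" where
  "diff_module D \<delta> \<longleftrightarrow> (\<forall>x y. \<delta> (x + y) = \<delta> x + \<delta> y) \<and>
     (\<forall>c x. \<delta> (c *s x) = D c *s x + c *s \<delta> x)"

definition dmod_iso :: "('k::field^'n \<Rightarrow> 'k^'n) \<Rightarrow> ('k^'m \<Rightarrow> 'k^'m) \<Rightarrow> bool" where
  "dmod_iso \<delta>1 \<delta>2 \<longleftrightarrow> (\<exists>f. Vector_Spaces.linear (*s) (*s) f \<and> bij f \<and> (\<forall>x. f (\<delta>1 x) = \<delta>2 (f x)))"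

text \<open>Coordinatewise derivation; on K^1 this is the trivial module 1.\<close>
definition dconst :: "('k::field \<Rightarrow> 'k) \<Rightarrow> 'k^'n \<Rightarrow> 'k^'n" where
  "dconst D v = (\<chi> i. D (v $ i))"

definition conn :: "('k::field^'n \<Rightarrow> 'k^'n) \<Rightarrow> 'k^'n^'n" where
  "conn \<delta> = (\<chi> i j. \<delta> (axis j 1) $ i)"

text \<open>det M = Lambda^n M, spanned by e_1 wedge ... wedge e_n, with
  d(e_1 wedge...wedge e_n) = trace(A) (e_1 wedge ... wedge e_n).\<close>
definition det_mod :: "('k::field \<Rightarrow> 'k) \<Rightarrow> ('k^'n \<Rightarrow> 'k^'n) \<Rightarrow> 'k^1 \<Rightarrow> 'k^1" where
  "det_mod D \<delta> v = dconst D v + trace (conn \<delta>) *s v"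

definition det_trivial :: "('k::field \<Rightarrow> 'k) \<Rightarrow> ('k^'n \<Rightarrow> 'k^'n) \<Rightarrow> bool" where
  "det_trivial D \<delta> \<longleftrightarrow> dmod_iso (det_mod D \<delta>) (dconst D :: 'k^1 \<Rightarrow> 'k^1)"

text \<open>Tensor product M1 (x) M2 on K^(n x m), basis e_i (x) e_j indexed by (i,j), with
  d(a (x) b) = da (x) b + a (x) db.\<close>
definition tensor_mod :: "('k::field \<Rightarrow> 'k) \<Rightarrow> ('k^'a \<Rightarrow> 'k^'a) \<Rightarrow> ('k^'b \<Rightarrow> 'k^'b)
    \<Rightarrow> 'k^('a \<times> 'b) \<Rightarrow> 'k^('a \<times> 'b)" where
  "tensor_mod D \<delta>1 \<delta>2 v = dconst D v +
     (\<chi> p q. conn \<delta>1 $ fst p $ fst q * (if snd p = snd q then 1 else 0)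
           + (if fst p = fst q then 1 else 0) * conn \<delta>2 $ snd p $ snd q) *v v"

text \<open>sym^2 M realised as the symmetric tensors in M (x) M (char 0).\<close>
definition is_sym2 :: "'k^('n::finite \<times> 'n) \<Rightarrow> bool" where
  "is_sym2 F \<longleftrightarrow> (\<forall>i j. F $ (i, j) = F $ (j, i))"

text \<open>The symmetric bilinear form on M^* defined by F; a in M^* given by its values a(e_i).\<close>
definition sym_form :: "'k::field^('n::finite \<times> 'n) \<Rightarrow> 'k^'n \<Rightarrow> 'k^'n \<Rightarrow> 'k" where
  "sym_form F a b = (\<Sum>i\<in>UNIV. \<Sum>j\<in>UNIV. F $ (i, j) * a $ i * b $ j)"

definition nondegenerate :: "'k::field^('n::finite \<times> 'n) \<Rightarrow> bool" where
  "nondegenerate F \<longleftrightarrow> (\<forall>a. (\<forall>b. sym_form F a b = 0) \<longrightarrow> a = 0)"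

definition has_isotropic_subspace :: "'k::field^('n::finite \<times> 'n) \<Rightarrow> nat \<Rightarrow> bool" where
  "has_isotropic_subspace F d \<longleftrightarrow>
     (\<exists>W. vec.subspace W \<and> vec.dim W = d \<and> (\<forall>a\<in>W. \<forall>b\<in>W. sym_form F a b = 0))"

end

theory Submission
  imports Defs
begin

lemma sum_pair_UNIV: "sum f (UNIV :: ('a::finite \<times> 'b::finite) set) = (\<Sum>i\<in>UNIV. \<Sum>j\<in>UNIV. f (i,j))"
  by (simp add: sum.cartesian_product UNIV_Times_UNIV[symmetric] del: UNIV_Times_UNIV)

lemma sum_22: "sum f (UNIV :: (2\<times>2) set) = f (1,1) + f(1,2) + f(2,1) + f(2,2)"
  by (simp add: sum_pair_UNIV sum_2 add.assoc)

definition dmat :: "('k::field \<Rightarrow> 'k) \<Rightarrow> 'k^'n^'m \<Rightarrow> 'k^'n^'m" where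
  "dmat D X = (\<chi> i j. D (X$i$j))"


locale der = fixes D :: "'k::field_char_0 \<Rightarrow> 'k" assumes der: "derivation D"
begin
lemma add: "D (a + b) = D a + D b" using der unfolding derivation_def by blast
lemma mult: "D (a * b) = D a * b + a * D b" using der unfolding derivation_def by blast
lemma zero[simp]: "D 0 = 0" using add[of 0 0] add_cancel_right_right[of "D 0" "D 0"] by simp
lemma one[simp]: "D 1 = 0" using mult[of 1 1] add_cancel_right_right[of "D 1" "D 1"] by simp
lemma uminus: "D (- a) = - D a" using add[of a "-a"] by (simp add: eq_neg_iff_add_eq_0 add.commute)
lemma diff: "D (a - b) = D a - D b" using add[of a "-b"] uminus[of b] by simp
lemma sum: "D (sum f S) = sum (\<lambda>x. D (f x)) S"
  by (induction S rule: infinite_finite_induct) (auto simp: add)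
lemma inverse: "a \<noteq> 0 \<Longrightarrow> D (inverse a) = - D a * inverse a * inverse a"
proof -
  assume a: "a \<noteq> 0"
  have "0 = D (a * inverse a)" using a by simp
  also have "\<dots> = D a * inverse a + a * D (inverse a)" by (rule mult)
  finally have "a * D (inverse a) = - D a * inverse a" by (simp add: eq_neg_iff_add_eq_0 add.commute)
  then show ?thesis using a by (simp add: field_simps)
qed
lemma dmat_mult: "dmat D (X ** Y) = dmat D X ** Y + X ** dmat D Y"
  by (simp add: dmat_def matrix_matrix_mult_def vec_eq_iff sum mult sum.distrib)
lemma dmat_transpose: "dmat D (transpose X) = transpose (dmat D X)"
  by (simp add: dmat_def transpose_def vec_eq_iff)
lemma dmat_add: "dmat D (X + Y) = dmat D X + dmat D Y"
  by (simp add: dmat_def vec_eq_iff add)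
lemma dmat_diff: "dmat D (X - Y) = dmat D X - dmat D Y"
  by (simp add: dmat_def vec_eq_iff diff)
lemma dmat_mat1: "dmat D (mat 1) = 0"
  by (simp add: dmat_def vec_eq_iff mat_def)
lemma dconst_mv: "dconst D (X *v x) = dmat D X *v x + X *v dconst D x"
  by (simp add: dconst_def dmat_def matrix_vector_mult_def vec_eq_iff sum mult sum.distrib)
lemma dconst_add: "dconst D (x + y) = dconst D x + dconst D y"
  by (simp add: dconst_def vec_eq_iff add)
lemma dconst_scale: "dconst D (c *s x) = D c *s x + c *s dconst D x"
  by (simp add: dconst_def vec_eq_iff mult)
lemma dconst_axis: "dconst D (axis j 1) = 0"
  by (simp add: dconst_def vec_eq_iff axis_def)
end

lemma matrix_add_rdistrib': "(A + B) ** C = A ** C + B ** (C :: 'a::semiring_1^_^_)"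
  by (simp add: matrix_matrix_mult_def vec_eq_iff sum.distrib distrib_right)
lemma matrix_diff_ldistrib': "A ** (B - C) = A ** B - A ** (C :: 'a::ring_1^_^_)"
  by (simp add: matrix_matrix_mult_def vec_eq_iff sum_subtractf right_diff_distrib)
lemma matrix_diff_rdistrib': "(A - B) ** C = A ** C - B ** (C :: 'a::ring_1^_^_)"
  by (simp add: matrix_matrix_mult_def vec_eq_iff sum_subtractf left_diff_distrib)
lemma matrix_uminus_left': "(- A) ** B = - (A ** (B :: 'a::ring_1^_^_))"
  by (simp add: matrix_matrix_mult_def vec_eq_iff sum_negf)
lemma matrix_uminus_right': "A ** (- B) = - (A ** (B :: 'a::ring_1^_^_))"
  by (simp add: matrix_matrix_mult_def vec_eq_iff sum_negf)
lemma transpose_add': "transpose (A + B) = transpose A + transpose B"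
  by (simp add: transpose_def vec_eq_iff)
lemma transpose_diff': "transpose (A - B) = transpose A - transpose B"
  by (simp add: transpose_def vec_eq_iff)
lemma transpose_uminus': "transpose (- A) = - transpose A"
  by (simp add: transpose_def vec_eq_iff)
lemma transpose_zero': "transpose 0 = 0"
  by (simp add: transpose_def vec_eq_iff)


section \<open>Differential modules as matrices\<close>

lemma dm_additive_sum:
  fixes \<delta> :: "'a::ab_group_add \<Rightarrow> 'b::ab_group_add"
  assumes add: "\<And>x y. \<delta> (x + y) = \<delta> x + \<delta> y"
  shows "\<delta> (sum f S) = sum (\<lambda>i. \<delta> (f i)) S"
proof -
  have z: "\<delta> 0 = 0" using add[of 0 0] add_cancel_right_right[of "\<delta> 0" "\<delta> 0"] by simp
  show ?thesis by (induction S rule: infinite_finite_induct) (auto simp: add z)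
qed

lemma dm_repr:
  fixes \<delta> :: "'k::field^'n \<Rightarrow> 'k^'n"
  assumes "diff_module D \<delta>"
  shows "\<delta> x = dconst D x + conn \<delta> *v x"
proof -
  have add: "\<And>x y. \<delta> (x + y) = \<delta> x + \<delta> y" and sc: "\<And>c x. \<delta> (c *s x) = D c *s x + c *s \<delta> x"
    using assms unfolding diff_module_def by blast+
  have "\<delta> x = \<delta> (sum (\<lambda>i. (x$i) *s axis i 1) UNIV)" by (simp add: basis_expansion)
  also have "\<dots> = sum (\<lambda>i. \<delta> ((x$i) *s axis i 1)) UNIV" by (rule dm_additive_sum[OF add])
  also have "\<dots> = sum (\<lambda>i. D (x$i) *s axis i 1) UNIV + sum (\<lambda>i. x$i *s \<delta> (axis i 1)) UNIV"
    by (simp add: sc sum.distrib)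
  also have "sum (\<lambda>i. D (x$i) *s axis i 1) UNIV = dconst D x"
    using basis_expansion[of "dconst D x"] by (simp add: dconst_def)
  also have "sum (\<lambda>i. x$i *s \<delta> (axis i 1)) UNIV = conn \<delta> *v x"
    by (simp add: vec_eq_iff conn_def matrix_vector_mult_def sum_component mult.commute)
  finally show ?thesis .
qed

definition dm :: "('k::field \<Rightarrow> 'k) \<Rightarrow> 'k^'n^'n \<Rightarrow> 'k^'n \<Rightarrow> 'k^'n" where
  "dm D A x = dconst D x + A *v x"

lemma dm_eq: "diff_module D \<delta> \<Longrightarrow> \<delta> = dm D (conn \<delta>)"
  by (rule ext) (simp add: dm_def dm_repr)

context der begin
lemma dm_diff_module: "diff_module D (dm D A)"
  unfolding diff_module_def dm_def
  by (simp add: dconst_add dconst_scale matrix_vector_right_distrib vec.scale algebra_simps)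
lemma conn_dm: "conn (dm D A) = A"
  unfolding conn_def dm_def dconst_axis
  by (simp add: vec_eq_iff matrix_vector_mult_def axis_def if_distrib cong: if_cong)

lemma transport:
  assumes QT: "Q ** T = dmat D Q + A ** Q"
    and G: "dmat D G + T ** G + G ** transpose T = 0"
  shows "dmat D (Q ** G ** transpose Q) + A ** (Q ** G ** transpose Q) + (Q ** G ** transpose Q) ** transpose A = 0"
proof -
  have dQ: "dmat D Q = Q ** T - A ** Q" using QT by simp
  have dG: "dmat D G = - (T ** G) - G ** transpose T" using G by (simp add: eq_neg_iff_add_eq_0 algebra_simps)
  show ?thesis
    by (simp add: dmat_mult dmat_transpose dQ dG matrix_add_ldistrib matrix_add_rdistrib'
      matrix_diff_ldistrib' matrix_diff_rdistrib' matrix_uminus_left' matrix_uminus_right'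
      transpose_diff' matrix_transpose_mul matrix_mul_assoc)
qed
end

section \<open>Tensor and sym^2\<close>

definition tens :: "'k::field^'a^'a \<Rightarrow> 'k^'b^'b \<Rightarrow> 'k^('a::finite\<times>'b::finite)^('a\<times>'b)" where
  "tens A B = (\<chi> p q. A $ fst p $ fst q * (if snd p = snd q then 1 else 0)
           + (if fst p = fst q then 1 else 0) * B $ snd p $ snd q)"

lemma tensor_mod_eq: "tensor_mod D \<delta>1 \<delta>2 = dm D (tens (conn \<delta>1) (conn \<delta>2))"
  by (rule ext) (simp add: tensor_mod_def dm_def tens_def)

definition fm :: "'k::field^('n::finite\<times>'n) \<Rightarrow> 'k^'n^'n" where
  "fm F = (\<chi> i j. F $ (i,j))"

lemma if01_l: "(if P then 1 else 0) * x * y = (if P then x * y else (0::'a::semiring_1))" by simp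
lemma if01_r: "x * (if P then 1 else 0) * y = (if P then x * y else (0::'a::semiring_1))" by simp

lemma tens_mv: "(tens A B *v F) $ (i,j) = (\<Sum>k\<in>UNIV. A$i$k * F$(k,j)) + (\<Sum>l\<in>UNIV. B$j$l * F$(i,l))"
proof -
  have "(tens A B *v F) $ (i,j) = (\<Sum>k\<in>UNIV. \<Sum>l\<in>UNIV. (if j = l then A$i$k * F$(k,l) else 0))
      + (\<Sum>k\<in>UNIV. \<Sum>l\<in>UNIV. (if i = k then B$j$l * F$(k,l) else 0))"
    unfolding tens_def matrix_vector_mult_def sum_pair_UNIV
    by (simp add: distrib_right sum.distrib if01_l if01_r cong: if_cong)
  also have "\<dots> = (\<Sum>k\<in>UNIV. A$i$k * F$(k,j)) + (\<Sum>l\<in>UNIV. B$j$l * F$(i,l))"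
    by (simp add: sum.swap[of _ UNIV UNIV] sum.delta)
  finally show ?thesis .
qed

lemma tensor_zero_iff:
  "(dm D (tens A A) F = 0) \<longleftrightarrow> dmat D (fm F) + A ** fm F + fm F ** transpose A = 0"
  by (simp add: vec_eq_iff dm_def tens_mv dmat_def fm_def dconst_def matrix_matrix_mult_def
      transpose_def split_paired_All mult.commute add.assoc)

context der begin

lemma det_trivial_D:
  assumes "det_trivial D \<delta>"
  shows "\<exists>c. c \<noteq> 0 \<and> D c = c * trace (conn \<delta>)"
proof -
  obtain f :: "'k^1 \<Rightarrow> 'k^1" where lf: "Vector_Spaces.linear (*s) (*s) f" and bf: "bij f"
    and ff: "\<And>x. f (det_mod D \<delta> x) = dconst D (f x)"
    using assms unfolding det_trivial_def dmod_iso_def by blast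
  interpret lf: Vector_Spaces.linear "(*s)" "(*s)" f by (rule lf)
  let ?t = "trace (conn \<delta>)"
  have "det_mod D \<delta> 1 = ?t *s 1"
    by (simp add: det_mod_def dconst_def vec_eq_iff)
  then have "?t *s f 1 = dconst D (f 1)" using ff[of 1] by (simp add: lf.scale)
  then have e: "?t * f 1 $ 1 = D (f 1 $ 1)" by (simp add: vec_eq_iff dconst_def)
  have "f 1 $ 1 \<noteq> 0"
  proof
    assume "f 1 $ 1 = 0"
    then have "f 1 = f 0" by (simp add: vec_eq_iff lf.zero)
    then have "(1::'k^1) = 0" using injD[OF bij_is_inj[OF bf]] by blast
    then show False by (simp add: vec_eq_iff)
  qed
  then show ?thesis using e by (intro exI[of _ "f 1 $ 1"]) (simp add: mult.commute)
qed

lemma det_trivial_I: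
  assumes "trace (conn \<delta>) = 0"
  shows "det_trivial D \<delta>"
  unfolding det_trivial_def dmod_iso_def
  by (rule exI[of _ id]) (simp add: det_mod_def assms vec.linear_id)

lemma iso_D:
  assumes "dmod_iso (dm D A) (dm D B)"
  shows "\<exists>P Q. P ** Q = mat 1 \<and> Q ** P = mat 1 \<and> P ** A = dmat D P + B ** P"
proof -
  obtain f where lf: "Vector_Spaces.linear (*s) (*s) f" and bf: "bij f"
    and ff: "\<And>x. f (dm D A x) = dm D B (f x)"
    using assms unfolding dmod_iso_def by blast
  define P where "P = matrix f"
  have fP: "\<And>x. f x = P *v x" using matrix_works[OF lf] by (simp add: P_def)
  have fP': "f = (*v) P" using fP by (simp add: fun_eq_iff)
  have "inj ((*v) P)" using bf unfolding fP' by (rule bij_is_inj)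
  then obtain Q where Q: "Q ** P = mat 1" using matrix_left_invertible_injective by blast
  have "surj (\<lambda>x. P *v x)" using bf unfolding fP' by (simp add: bij_is_surj)
  then obtain C where C: "P ** C = mat 1" using matrix_right_invertible_surjective by blast
  have "Q = Q ** (P ** C)" using C by simp
  also have "\<dots> = (Q ** P) ** C" by (rule matrix_mul_assoc)
  also have "\<dots> = C" using Q by simp
  finally have "Q = C" .
  have "(P ** A) *v x = (dmat D P + B ** P) *v x" for x
    using ff[of x] by (simp add: fP dm_def dconst_mv matrix_vector_right_distrib
        matrix_vector_mult_add_rdistrib matrix_vector_mul_assoc[symmetric] algebra_simps)
  then have PA: "P ** A = dmat D P + B ** P" by (simp add: matrix_eq)
  have PQ: "P ** Q = mat 1" using C \<open>Q = C\<close> by simp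
  show ?thesis
    apply (rule exI[of _ P], rule exI[of _ Q])
    using PQ Q PA by (intro conjI)
qed

lemma iso_I:
  assumes "P ** Q = mat 1" "Q ** P = mat 1" "P ** A = dmat D P + B ** P"
  shows "dmod_iso (dm D A) (dm D B)"
  unfolding dmod_iso_def
proof (rule exI[of _ "(*v) P"], intro conjI allI)
  show "Vector_Spaces.linear (*s) (*s) ((*v) P)" by (rule matrix_vector_mul_linear_gen)
  show "bij ((*v) P)"
  proof (rule bij_betw_byWitness[where f'="(*v) Q"])
    show "\<forall>a\<in>UNIV. Q *v (P *v a) = a" by (simp add: matrix_vector_mul_assoc assms(2))
    show "\<forall>a\<in>UNIV. P *v (Q *v a) = a" by (simp add: matrix_vector_mul_assoc assms(1))
  qed auto
  fix x
  show "P *v dm D A x = dm D B (P *v x)"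
  proof -
    have "P *v dm D A x = P *v dconst D x + (P ** A) *v x"
      by (simp add: dm_def matrix_vector_right_distrib matrix_vector_mul_assoc)
    also have "\<dots> = P *v dconst D x + dmat D P *v x + B *v (P *v x)"
      by (simp add: assms(3) matrix_vector_mult_add_rdistrib matrix_vector_mul_assoc add.assoc)
    also have "\<dots> = dm D B (P *v x)"
      by (simp add: dm_def dconst_mv)
    finally show ?thesis .
  qed
qed
end

definition bil :: "'k::field^'n^'n \<Rightarrow> 'k^'n \<Rightarrow> 'k^'n \<Rightarrow> 'k" where
  "bil X a b = (\<Sum>i\<in>UNIV. \<Sum>j\<in>UNIV. X$i$j * a$i * b$j)"

lemma sym_form_bil: "sym_form F a b = bil (fm F) a b"
  by (simp add: sym_form_def bil_def fm_def)

definition dotv :: "'k::field^'n \<Rightarrow> 'k^'n \<Rightarrow> 'k" where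
  "dotv u v = (\<Sum>j\<in>UNIV. u$j * v$j)"

lemma bil_dotv: "bil X a b = dotv (a v* X) b"
proof -
  have "bil X a b = (\<Sum>j\<in>UNIV. \<Sum>i\<in>UNIV. X$i$j * a$i * b$j)"
    unfolding bil_def by (rule sum.swap)
  also have "\<dots> = dotv (a v* X) b"
    by (simp add: dotv_def vector_matrix_mult_def sum_distrib_right sum_distrib_left mult_ac)
  finally show ?thesis .
qed

lemma dotv_mv: "dotv (Q *v y) b = dotv y (b v* Q)"
proof -
  have "dotv (Q *v y) b = (\<Sum>j\<in>UNIV. \<Sum>p\<in>UNIV. Q$j$p * y$p * b$j)"
    by (simp add: dotv_def matrix_vector_mult_def sum_distrib_right)
  also have "\<dots> = (\<Sum>p\<in>UNIV. \<Sum>j\<in>UNIV. Q$j$p * y$p * b$j)" by (rule sum.swap)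
  also have "\<dots> = dotv y (b v* Q)"
    by (simp add: dotv_def vector_matrix_mult_def sum_distrib_left mult_ac)
  finally show ?thesis .
qed

lemma bil_congr: "bil (Q ** G ** transpose Q) a b = bil G (a v* Q) (b v* Q)"
proof -
  have "a v* (Q ** G ** transpose Q) = Q *v ((a v* Q) v* G)"
    by (simp add: vector_matrix_mul_assoc[symmetric])
  then show ?thesis by (simp add: bil_dotv dotv_mv)
qed

lemma dotv_axis: "dotv u (axis j 1) = u $ j"
  by (simp add: dotv_def axis_def if_distrib cong: if_cong)

lemma bil_zero_all: "(\<forall>b. bil X a b = 0) \<Longrightarrow> a v* X = 0"
  by (simp add: bil_dotv vec_eq_iff) (metis dotv_axis)

lemma bil_add_l: "bil X (a + a') b = bil X a b + bil X a' b"
  by (simp add: bil_def ring_distribs sum.distrib)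
lemma bil_add_r: "bil X a (b + b') = bil X a b + bil X a b'"
  by (simp add: bil_def ring_distribs sum.distrib)
lemma bil_diff_l: "bil X (a - a') b = bil X a b - bil X a' b"
  by (simp add: bil_def ring_distribs sum_subtractf)
lemma bil_diff_r: "bil X a (b - b') = bil X a b - bil X a b'"
  by (simp add: bil_def ring_distribs sum_subtractf)
lemma bil_scale_l: "bil X (c *s a) b = c * bil X a b"
  by (simp add: bil_def sum_distrib_left mult_ac)
lemma bil_scale_r: "bil X a (c *s b) = c * bil X a b"
  by (simp add: bil_def sum_distrib_left mult_ac)
lemma bil_neg_l: "bil X (- a) b = - bil X a b"
  by (simp add: bil_def sum_negf)
lemma bil_neg_r: "bil X a (- b) = - bil X a b"
  by (simp add: bil_def sum_negf)
lemma bil_sym: "transpose X = X \<Longrightarrow> bil X a b = bil X b a"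
proof -
  assume h: "transpose X = X"
  have e: "X$j$i = X$i$j" for i j using arg_cong[of _ _ "\<lambda>M. M$i$j", OF h] by (simp add: transpose_def)
  show ?thesis unfolding bil_def
    by (subst sum.swap) (simp add: e mult_ac)
qed

lemmas bil_simps = bil_add_l bil_add_r bil_diff_l bil_diff_r bil_scale_l bil_scale_r bil_neg_l bil_neg_r

section \<open>The standard split form on 2 x 2\<close>

definition om :: "'k::field^2^2" where
  "om = (\<chi> i j. if i = 1 \<and> j = 2 then 1 else if i = 2 \<and> j = 1 then -1 else 0)"

definition G0 :: "'k::field^(2\<times>2)^(2\<times>2)" where
  "G0 = (\<chi> p q. om$fst p$fst q * om$snd p$snd q)"

lemma G0_sym: "transpose (G0::'k::field^_^_) = G0"
  by (simp add: vec_eq_iff transpose_def G0_def om_def split_paired_All forall_2)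

lemma G0_sq: "(G0::'k::field^_^_) ** G0 = mat 1"
  unfolding vec_eq_iff split_paired_All forall_2
  by (simp add: matrix_matrix_mult_def G0_def om_def mat_def sum_22)

lemma G0_hor: "((tens a b :: 'k::field^(2\<times>2)^(2\<times>2)) ** G0 + G0 ** transpose (tens a b))$p$q = (trace a + trace b) * G0$p$q"
proof -
  have "\<forall>p1 p2 q1 q2. ((tens a b :: 'k::field^(2\<times>2)^(2\<times>2)) ** G0 + G0 ** transpose (tens a b))$(p1,p2)$(q1,q2) = (trace a + trace b) * G0$(p1,p2)$(q1,q2)"
    unfolding forall_2
    by (simp add: tens_def trace_def sum_2 matrix_matrix_mult_def G0_def om_def transpose_def sum_22)
  then show ?thesis by (cases p; cases q) simp
qed


lemma so_decomp:
  fixes X :: "'k::field_char_0^(2\<times>2)^(2\<times>2)"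
  assumes "X ** G0 + G0 ** transpose X = 0"
  shows "\<exists>a b. trace a = 0 \<and> trace b = 0 \<and> X = tens a b"
proof -
  have "\<forall>p1 p2 q1 q2. (X ** G0 + G0 ** transpose X)$(p1,p2)$(q1,q2) = 0" using assms by simp
  note h = this[unfolded forall_2, simplified matrix_matrix_mult_def G0_def om_def transpose_def sum_22, simplified]
  define a :: "'k^2^2" where "a = (\<chi> i j. if i = 1 \<and> j = 1 then (X$(1,1)$(1,1) + X$(1,2)$(1,2))/2
     else if i = 1 \<and> j = 2 then X$(1,1)$(2,1) else if i = 2 \<and> j = 1 then X$(2,1)$(1,1)
     else - (X$(1,1)$(1,1) + X$(1,2)$(1,2))/2)"
  define b :: "'k^2^2" where "b = (\<chi> i j. if i = 1 \<and> j = 1 then (X$(1,1)$(1,1) - X$(1,2)$(1,2))/2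
     else if i = 1 \<and> j = 2 then X$(1,1)$(1,2) else if i = 2 \<and> j = 1 then X$(1,2)$(1,1)
     else - (X$(1,1)$(1,1) - X$(1,2)$(1,2))/2)"
  have "trace a = 0" by (simp add: a_def trace_def sum_2 field_simps)
  moreover have "trace b = 0" by (simp add: b_def trace_def sum_2 field_simps)
  moreover have "X = tens a b"
  proof -
    have e: "X$(1,1)$(2,2) = 0" "X$(1,2)$(2,2) = X$(1,1)$(2,1)" "X$(2,1)$(2,2) = X$(1,1)$(1,2)"
      "X$(2,2)$(2,2) = - X$(1,1)$(1,1)" "X$(1,2)$(2,1) = 0" "X$(2,1)$(2,1) = - X$(1,2)$(1,2)"
      "X$(2,2)$(2,1) = X$(1,2)$(1,1)" "X$(2,1)$(1,2) = 0" "X$(2,2)$(1,2) = X$(2,1)$(1,1)" "X$(2,2)$(1,1) = 0"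
      using h by (simp_all add: eq_neg_iff_add_eq_0 add.commute)
    show ?thesis unfolding vec_eq_iff split_paired_All forall_2
      by (simp add: tens_def a_def b_def e field_simps)
  qed
  ultimately show ?thesis by blast
qed

lemma vec_span2: "x \<in> vec.span {u, v} \<longleftrightarrow> (\<exists>s t. x = s *s u + t *s v)"
proof -
  have "x \<in> vec.span {u, v} \<longleftrightarrow> (\<exists>k. x - k *s u \<in> vec.span {v})"
    by (simp add: vec.span_breakdown_eq)
  also have "\<dots> \<longleftrightarrow> (\<exists>s t. x = s *s u + t *s v)"
  proof
    assume "\<exists>k. x - k *s u \<in> vec.span {v}"
    then obtain k c where "x - k *s u = c *s v" by (auto simp: vec.span_singleton)
    note e = this
    have "x = (x - k *s u) + k *s u" by simp
    also have "\<dots> = c *s v + k *s u" by (simp only: e)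
    finally have "x = c *s v + k *s u" .
    then have "x = k *s u + c *s v" by (simp add: add.commute)
    then show "\<exists>s t. x = s *s u + t *s v" by blast
  next
    assume "\<exists>s t. x = s *s u + t *s v"
    then obtain s t where "x = s *s u + t *s v" by blast
    then have "x - s *s u = t *s v" by simp
    then show "\<exists>k. x - k *s u \<in> vec.span {v}" by (auto simp: vec.span_singleton)
  qed
  finally show ?thesis .
qed

lemma vec_indep2_I:
  fixes u v :: "'k::field^'n"
  assumes "u \<noteq> v" "\<And>s t. s *s u + t *s v = 0 \<Longrightarrow> s = 0 \<and> t = 0"
  shows "vec.independent {u, v}"
proof -
  have "v \<noteq> 0" using assms(2)[of 0 1] by auto
  moreover have "u \<notin> vec.span {v}"
  proof
    assume "u \<in> vec.span {v}"
    then obtain c where "u = c *s v" by (auto simp: vec.span_singleton)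
    then have "1 *s u + (- c) *s v = 0" by (simp add: vec_eq_iff)
    then show False using assms(2) by fastforce
  qed
  ultimately show ?thesis using assms(1) by (simp add: vec.independent_insert)
qed

lemma vec_indep2_D:
  fixes u v :: "'k::field^'n"
  assumes "u \<noteq> v" "vec.independent {u, v}" "s *s u + t *s v = 0"
  shows "s = 0 \<and> t = 0"
proof -
  have v0: "v \<noteq> 0" and us: "u \<notin> vec.span {v}"
    using assms(1,2) by (auto simp: vec.independent_insert)
  have "s = 0"
  proof (rule ccontr)
    assume "s \<noteq> 0"
    have "s * u$i + t * v$i = 0" for i using arg_cong[of _ _ "\<lambda>x. x$i", OF assms(3)] by simp
    then have "s * u$i = - (t * v$i)" for i by (simp add: eq_neg_iff_add_eq_0)
    then have "u = (- t / s) *s v" using \<open>s \<noteq> 0\<close>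
      by (simp add: vec_eq_iff field_simps)
    then have "u \<in> vec.span {v}" unfolding vec.span_singleton
      using rangeI[of "\<lambda>k. k *s v" "-t/s"] by simp
    then show False using us by blast
  qed
  then have "t *s v = 0" using assms(3) by simp
  moreover obtain i where "v$i \<noteq> 0" using v0 by (auto simp: vec_eq_iff)
  ultimately have "t = 0" using arg_cong[of _ _ "\<lambda>x. x$i", OF \<open>t *s v = 0\<close>] by simp
  then show ?thesis using \<open>s = 0\<close> by simp
qed

lemma if_mult: "(if P then a else b) * c = (if P then a * c else b * c)" by simp
lemma mult_if: "c * (if P then a else b) = (if P then c * a else c * b)" by simp

lemma mat_mult_l: "(mat t ** M) $ i $ j = t * (M $ i $ j :: 'a::semiring_1)"
  by (simp add: matrix_matrix_mult_def mat_def if_mult sum.delta cong: if_cong)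
lemma mat_mult_r: "(M ** mat t) $ i $ j = (M $ i $ j :: 'a::comm_semiring_1) * t"
  by (simp add: matrix_matrix_mult_def mat_def mult_if sum.delta' cong: if_cong)


lemma mat_comm: "M ** mat s = mat s ** (M :: 'a::comm_semiring_1^'n^'m)"
  by (simp add: vec_eq_iff mat_mult_l mat_mult_r mult.commute)
lemma mat_mat: "mat s ** mat t = (mat (s * t) :: 'a::comm_semiring_1^'n^'n)"
  unfolding vec_eq_iff mat_mult_l by (simp add: mat_def)

lemma bil_iso0:
  assumes "\<forall>i. u$(i,2) = 0" "\<forall>i. v$(i,2) = 0"
  shows "bil (mat s ** G0 :: 'k::field^(2\<times>2)^(2\<times>2)) u v = 0"
  using assms unfolding bil_def sum_22 mat_mult_l
  by (simp add: G0_def om_def)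

context der begin
lemma dmat_mat: "dmat D (mat c) = mat (D c)"
  by (simp add: dmat_def mat_def vec_eq_iff if_distrib[where f=D] cong: if_cong)
lemma dmat_G0: "dmat D (G0 :: 'k^(2\<times>2)^(2\<times>2)) = 0"
  unfolding vec_eq_iff split_paired_All forall_2
  by (simp add: dmat_def G0_def om_def uminus)

lemma forward:
  fixes A :: "'k^4^4" and a b :: "'k^2^2" and P :: "'k^4^(2\<times>2)" and Q :: "'k^(2\<times>2)^4"
  assumes c: "c \<noteq> 0" "D c = c * trace a" and d: "d \<noteq> 0" "D d = d * trace b"
    and PQ: "P ** Q = mat 1" and QP: "Q ** P = mat 1" and PA: "P ** A = dmat D P + tens a b ** P"
  shows "\<exists>F :: 'k^(4\<times>4). is_sym2 F \<and> dm D (tens A A) F = 0 \<and> nondegenerate F \<and> has_isotropic_subspace F 2"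
proof -
  define T where "T = tens a b"
  define s where "s = inverse (c * d)"
  have s0: "s \<noteq> 0" using c d by (simp add: s_def)
  have Ds: "D s = - (trace a + trace b) * s"
  proof -
    have e1: "D s = - D (c * d) * s * s" unfolding s_def by (rule inverse) (use c d in simp)
    have e2: "D (c * d) = (trace a + trace b) * (c * d)" by (simp add: mult c d algebra_simps)
    have e3: "c * d * s = 1" using c d by (simp add: s_def field_simps)
    have "D s = - (trace a + trace b) * (c * d * s) * s" by (simp add: e1 e2 algebra_simps)
    then show ?thesis by (simp add: e3)
  qed
  define Gm where "Gm = mat s ** G0"
  have QT: "Q ** T = dmat D Q + A ** Q"
  proof -
    have "dmat D (Q ** P) = 0" by (simp add: QP dmat_mat1)
    then have dQP: "dmat D Q ** P + Q ** dmat D P = 0" by (simp add: dmat_mult)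
    have "A ** Q = Q ** (P ** A) ** Q" using QP by (simp add: matrix_mul_assoc)
    also have "\<dots> = Q ** dmat D P ** Q + Q ** T" using PA PQ
      by (simp add: T_def matrix_add_ldistrib matrix_add_rdistrib' matrix_mul_assoc[symmetric])
    also have "Q ** dmat D P ** Q = - dmat D Q"
    proof -
      have "Q ** dmat D P = - (dmat D Q ** P)" using dQP by (simp add: eq_neg_iff_add_eq_0 add.commute)
      then have "Q ** dmat D P ** Q = - (dmat D Q ** P) ** Q" by simp
      also have "\<dots> = - dmat D Q" using PQ by (simp add: matrix_uminus_left' matrix_mul_assoc[symmetric])
      finally show ?thesis .
    qed
    finally have "A ** Q = - dmat D Q + Q ** T" .
    then show ?thesis by (simp add: algebra_simps)
  qed
  have Ghor: "dmat D Gm + T ** Gm + Gm ** transpose T = 0"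
  proof -
    have "dmat D Gm + T ** Gm + Gm ** transpose T = mat (D s) ** G0 + mat s ** (T ** G0 + G0 ** transpose T)"
      unfolding Gm_def
      by (simp add: dmat_mult dmat_mat dmat_G0 matrix_mul_assoc mat_comm matrix_add_ldistrib add.assoc)
    also have "\<dots> = 0"
      using G0_hor[of a b] unfolding T_def
      by (simp add: vec_eq_iff mat_mult_l Ds algebra_simps)
    finally show ?thesis .
  qed
  define X where "X = Q ** Gm ** transpose Q"
  have Xhor: "dmat D X + A ** X + X ** transpose A = 0"
    unfolding X_def by (rule transport[OF QT Ghor])
  define F :: "'k^(4\<times>4)" where "F = (\<chi> p. X $ fst p $ snd p)"
  have fmF: "fm F = X" by (simp add: fm_def F_def vec_eq_iff)
  have Gm_sym: "transpose Gm = Gm"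
    by (simp add: Gm_def matrix_transpose_mul G0_sym mat_comm)
  have Xsym: "transpose X = X"
    by (simp add: X_def matrix_transpose_mul Gm_sym matrix_mul_assoc)
  have sym: "is_sym2 F"
    unfolding is_sym2_def F_def
    using Xsym by (simp add: vec_eq_iff transpose_def)
  have zero: "dm D (tens A A) F = 0"
    using Xhor by (simp add: tensor_zero_iff fmF)
  define Ginv where "Ginv = mat (inverse s) ** (G0 :: 'k^(2\<times>2)^(2\<times>2))"
  have GG: "Gm ** Ginv = mat 1"
  proof -
    have "Gm ** Ginv = mat s ** (G0 ** mat (inverse s)) ** G0"
      unfolding Gm_def Ginv_def by (simp add: matrix_mul_assoc)
    also have "\<dots> = mat s ** (mat (inverse s) ** G0) ** G0" by (simp only: mat_comm[of G0])
    also have "\<dots> = mat s ** mat (inverse s) ** (G0 ** G0)" by (simp add: matrix_mul_assoc)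
    finally have "Gm ** Ginv = mat s ** mat (inverse s) ** (G0 ** G0)" .
    then show ?thesis using s0 by (simp add: mat_mat G0_sq)
  qed
  have Xinv: "X ** (transpose P ** Ginv ** P) = mat 1"
  proof -
    have QtPt: "transpose Q ** transpose P = mat 1"
    proof -
      have "transpose (P ** Q) = transpose Q ** transpose P" by (rule matrix_transpose_mul)
      then show ?thesis using PQ by simp
    qed
    have "X ** (transpose P ** Ginv ** P) = Q ** Gm ** (transpose Q ** transpose P) ** Ginv ** P"
      unfolding X_def by (simp add: matrix_mul_assoc)
    also have "\<dots> = Q ** (Gm ** Ginv) ** P" by (simp add: QtPt matrix_mul_assoc)
    also have "\<dots> = mat 1" by (simp add: GG QP)
    finally show ?thesis .
  qed
  have nd: "nondegenerate F"
    unfolding nondegenerate_def sym_form_bil fmF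
  proof (intro allI impI)
    fix a assume "\<forall>b. bil X a b = 0"
    then have "a v* X = 0" by (rule bil_zero_all)
    then have "(a v* X) v* (transpose P ** Ginv ** P) = 0" by simp
    then show "a = 0" by (simp add: vector_matrix_mul_assoc Xinv)
  qed
  define e1 :: "'k^(2\<times>2)" where "e1 = axis (1,1) 1"
  define e2 :: "'k^(2\<times>2)" where "e2 = axis (2,1) 1"
  define w1 where "w1 = e1 v* P"
  define w2 where "w2 = e2 v* P"
  have wQ: "(s1 *s w1 + s2 *s w2) v* Q = s1 *s e1 + s2 *s e2" for s1 s2
    by (simp add: w1_def w2_def vector_matrix_left_distrib scalar_vector_matrix_assoc vector_matrix_mul_assoc PQ)
  have w12: "w1 \<noteq> w2"
  proof
    assume "w1 = w2"
    then have "(1 *s w1 + 0 *s w2) v* Q = (0 *s w1 + 1 *s w2) v* Q" by simp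
    then have "e1 = e2" unfolding wQ by simp
    then show False unfolding e1_def e2_def by (simp add: axis_eq_axis)
  qed
  have ind: "vec.independent {w1, w2}"
  proof (rule vec_indep2_I[OF w12])
    fix s1 s2 assume "s1 *s w1 + s2 *s w2 = 0"
    then have "s1 *s e1 + s2 *s e2 = 0" using wQ[of s1 s2] by simp
    then have "(s1 *s e1 + s2 *s e2) $ (1,1) = 0" "(s1 *s e1 + s2 *s e2) $ (2,1) = 0" by simp_all
    then show "s1 = 0 \<and> s2 = 0" by (simp add: e1_def e2_def axis_def)
  qed
  have iso: "has_isotropic_subspace F 2"
    unfolding has_isotropic_subspace_def
  proof (intro exI conjI ballI)
    show "vec.subspace (vec.span {w1, w2})" by simp
    show "vec.dim (vec.span {w1, w2}) = 2"
      using vec.dim_span_eq_card_independent[OF ind] w12 by simp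
    fix x y assume "x \<in> vec.span {w1, w2}" "y \<in> vec.span {w1, w2}"
    then obtain s1 s2 t1 t2 where x: "x = s1 *s w1 + s2 *s w2" and y: "y = t1 *s w1 + t2 *s w2"
      by (auto simp: vec_span2)
    have "sym_form F x y = bil Gm (x v* Q) (y v* Q)"
      by (simp add: sym_form_bil fmF X_def bil_congr)
    also have "\<dots> = 0" unfolding x y wQ Gm_def
      by (rule bil_iso0) (simp_all add: e1_def e2_def axis_def)
    finally show "sym_form F x y = 0" .
  qed
  show ?thesis using sym zero nd iso by blast
qed
end


lemma quadform: "(P ** X ** transpose P) $ p $ q = bil X (P$p) (P$q)"
proof -
  have "(P ** X ** transpose P) $ p $ q = (\<Sum>j\<in>UNIV. \<Sum>i\<in>UNIV. X$i$j * P$p$i * P$q$j)"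
    by (simp add: matrix_matrix_mult_def transpose_def sum_distrib_right sum_distrib_left mult_ac)
  also have "\<dots> = bil X (P$p) (P$q)" unfolding bil_def by (rule sum.swap[symmetric])
  finally show ?thesis .
qed

lemma dim_eq_4_22: "vec.dim (UNIV :: ('k::field^(2\<times>2)) set) = vec.dim (UNIV :: ('k^4) set)"
  unfolding vec_dim_card by simp

context der begin
lemma converse:
  fixes A :: "'k^4^4" and F :: "'k^(4\<times>4)"
  assumes sym: "is_sym2 F" and hor: "dm D (tens A A) F = 0" and nd: "nondegenerate F"
    and iso: "has_isotropic_subspace F 2"
  shows "\<exists>(a::'k^2^2) (b::'k^2^2) (P::'k^4^(2\<times>2)) (Q::'k^(2\<times>2)^4). trace a = 0 \<and> trace b = 0 \<and>
           P ** Q = mat 1 \<and> Q ** P = mat 1 \<and> P ** A = dmat D P + tens a b ** P"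
proof -
  define X where "X = fm F"
  have Xsym: "transpose X = X" using sym by (simp add: X_def fm_def is_sym2_def transpose_def vec_eq_iff)
  have Xhor: "dmat D X + A ** X + X ** transpose A = 0" using hor by (simp add: tensor_zero_iff X_def)
  have ndX: "\<And>a. (\<forall>b. bil X a b = 0) \<Longrightarrow> a = 0"
    using nd by (simp add: nondegenerate_def sym_form_bil X_def)
  have bsym: "\<And>a b. bil X a b = bil X b a" using Xsym by (rule bil_sym)
  obtain W where W: "vec.subspace W" "vec.dim W = 2" "\<forall>a\<in>W. \<forall>b\<in>W. sym_form F a b = 0"
    using iso unfolding has_isotropic_subspace_def by blast
  obtain B where B: "B \<subseteq> W" "vec.independent B" "W \<subseteq> vec.span B" "card B = vec.dim W"
    by (rule vec.basis_exists)
  have "card B = 2" using B(4) W(2) by simp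
  then obtain w1 w2 where w: "B = {w1, w2}" "w1 \<noteq> w2" unfolding card_2_iff by blast
  have ind: "vec.independent {w1, w2}" using B w by simp
  have ww: "bil X w1 w1 = 0" "bil X w1 w2 = 0" "bil X w2 w1 = 0" "bil X w2 w2 = 0"
    using W(3) B(1) w unfolding sym_form_bil X_def by auto
  define R :: "'k^4^2" where "R = (\<chi> i. if i = 1 then w1 v* X else w2 v* X)"
  have "\<exists>Bm. R ** Bm = mat 1"
    unfolding matrix_right_invertible_independent_rows
  proof (intro allI impI)
    fix c :: "2 \<Rightarrow> 'k" and i
    assume "(\<Sum>i\<in>UNIV. c i *s row i R) = 0"
    then have "(c 1 *s w1 + c 2 *s w2) v* X = 0"
      by (simp add: sum_2 R_def row_def vector_matrix_left_distrib scalar_vector_matrix_assoc)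
    then have "\<forall>b. bil X (c 1 *s w1 + c 2 *s w2) b = 0" by (simp add: bil_dotv dotv_def)
    then have "c 1 *s w1 + c 2 *s w2 = 0" by (rule ndX)
    then have "c 1 = 0 \<and> c 2 = 0" using vec_indep2_D[OF w(2) ind] by blast
    then show "c i = 0" using exhaust_2[of i] by auto
  qed
  then obtain Bm where Bm: "R ** Bm = mat 1" by blast
  define z1 where "z1 = column 1 Bm"
  define z2 where "z2 = column 2 Bm"
  have Rb: "dotv (R$i) (column j Bm) = (R ** Bm)$i$j" for i j
    by (simp add: dotv_def matrix_matrix_mult_def column_def)
  have R12: "R$1 = w1 v* X" "R$2 = w2 v* X" by (simp_all add: R_def)
  have wz: "bil X w1 z1 = 1" "bil X w1 z2 = 0" "bil X w2 z1 = 0" "bil X w2 z2 = 1"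
    using Rb[of 1 1] Rb[of 1 2] Rb[of 2 1] Rb[of 2 2] unfolding Bm R12
    by (simp_all add: bil_dotv z1_def z2_def mat_def)
  have zw: "bil X z1 w1 = 1" "bil X z2 w1 = 0" "bil X z1 w2 = 0" "bil X z2 w2 = 1"
    using wz bsym by metis+
  have zz: "bil X z2 z1 = bil X z1 z2" using bsym by metis
  define z1' where "z1' = z1 - (bil X z1 z1 / 2) *s w1"
  define z2' where "z2' = z2 - (bil X z2 z2 / 2) *s w2 - bil X z1 z2 *s w1"
  define u :: "2\<times>2 \<Rightarrow> 'k^4" where
    "u p = (if p = (1,1) then w1 else if p = (1,2) then w2 else if p = (2,1) then - z2' else z1')" for p
  define P :: "'k^4^(2\<times>2)" where "P = (\<chi> p. u p)"
  have PXP: "P ** X ** transpose P = G0"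
    unfolding vec_eq_iff split_paired_All forall_2 quadform
    by (simp add: P_def u_def G0_def om_def z1'_def z2'_def bil_simps ww wz zw zz field_simps)
  define C where "C = X ** transpose P ** G0"
  have PC: "P ** C = mat 1"
  proof -
    have "P ** C = (P ** X ** transpose P) ** G0" by (simp add: C_def matrix_mul_assoc)
    then show ?thesis by (simp add: PXP G0_sq)
  qed
  have "surj ((*v) P)" using PC matrix_right_invertible_surjective by blast
  then have "inj ((*v) P)"
    using vec.linear_surjective_imp_injective[OF matrix_vector_mul_linear_gen _ dim_eq_4_22] by blast
  then obtain Q where QP: "Q ** P = mat 1" using matrix_left_invertible_injective by blast
  have "Q = Q ** (P ** C)" using PC by simp
  also have "\<dots> = (Q ** P) ** C" by (rule matrix_mul_assoc)
  also have "\<dots> = C" using QP by simp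
  finally have "Q = C" .
  then have PQ: "P ** Q = mat 1" using PC by simp
  define Ah where "Ah = (P ** A - dmat D P) ** Q"
  have AhP: "Ah ** P = P ** A - dmat D P"
  proof -
    have "Ah ** P = (P ** A - dmat D P) ** (Q ** P)" by (simp add: Ah_def matrix_mul_assoc)
    then show ?thesis using QP by simp
  qed
  have PA: "P ** A = dmat D P + Ah ** P" by (simp add: AhP)
  have "dmat D (P ** X ** transpose P) + Ah ** (P ** X ** transpose P) + (P ** X ** transpose P) ** transpose Ah = 0"
    by (rule transport[OF PA Xhor])
  then have "Ah ** G0 + G0 ** transpose Ah = 0" by (simp add: PXP dmat_G0)
  then obtain a b where ab: "trace a = 0" "trace b = 0" "Ah = tens a b" using so_decomp by blast
  have "P ** A = dmat D P + tens a b ** P" using PA ab(3) by simp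
  then show ?thesis using ab(1,2) PQ QP by blast
qed
end

theorem theorem6p2:
  fixes D :: "'k::field_char_0 \<Rightarrow> 'k" and \<delta> :: "'k^4 \<Rightarrow> 'k^4"
  assumes "derivation D"
    and "diff_module D \<delta>"
    and "det_trivial D \<delta>"
  shows "(\<exists>(\<delta>A :: 'k^2 \<Rightarrow> 'k^2) (\<delta>B :: 'k^2 \<Rightarrow> 'k^2).
            diff_module D \<delta>A \<and> diff_module D \<delta>B \<and> det_trivial D \<delta>A \<and> det_trivial D \<delta>B \<and>
            dmod_iso \<delta> (tensor_mod D \<delta>A \<delta>B))
     \<longleftrightarrow> (\<exists>F :: 'k^(4 \<times> 4). is_sym2 F \<and> tensor_mod D \<delta> \<delta> F = 0 \<and>
            nondegenerate F \<and> has_isotropic_subspace F 2)"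
proof -
  interpret der D by unfold_locales (rule assms(1))
  define A where "A = conn \<delta>"
  have dA: "\<delta> = dm D A" using dm_eq[OF assms(2)] by (simp add: A_def)
  have tA: "tensor_mod D \<delta> \<delta> = dm D (tens A A)" by (simp add: tensor_mod_eq A_def)
  show ?thesis
  proof
    assume "\<exists>(\<delta>A :: 'k^2 \<Rightarrow> 'k^2) (\<delta>B :: 'k^2 \<Rightarrow> 'k^2).
            diff_module D \<delta>A \<and> diff_module D \<delta>B \<and> det_trivial D \<delta>A \<and> det_trivial D \<delta>B \<and>
            dmod_iso \<delta> (tensor_mod D \<delta>A \<delta>B)"
    then obtain \<delta>A \<delta>B :: "'k^2 \<Rightarrow> 'k^2" where h: "det_trivial D \<delta>A" "det_trivial D \<delta>B"
      "dmod_iso \<delta> (tensor_mod D \<delta>A \<delta>B)" by blast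
    obtain c where c: "c \<noteq> 0" "D c = c * trace (conn \<delta>A)" using det_trivial_D[OF h(1)] by blast
    obtain d where d: "d \<noteq> 0" "D d = d * trace (conn \<delta>B)" using det_trivial_D[OF h(2)] by blast
    have "dmod_iso (dm D A) (dm D (tens (conn \<delta>A) (conn \<delta>B)))"
      using h(3) by (simp add: dA tensor_mod_eq)
    then obtain P Q where PQ: "P ** Q = mat 1" "Q ** P = mat 1"
      "P ** A = dmat D P + tens (conn \<delta>A) (conn \<delta>B) ** P"
      using iso_D by blast
    obtain F :: "'k^(4\<times>4)" where "is_sym2 F \<and> dm D (tens A A) F = 0 \<and> nondegenerate F \<and> has_isotropic_subspace F 2"
      using forward[OF c d PQ] by blast
    then show "\<exists>F :: 'k^(4 \<times> 4). is_sym2 F \<and> tensor_mod D \<delta> \<delta> F = 0 \<and>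
            nondegenerate F \<and> has_isotropic_subspace F 2" using tA by metis
  next
    assume "\<exists>F :: 'k^(4 \<times> 4). is_sym2 F \<and> tensor_mod D \<delta> \<delta> F = 0 \<and>
            nondegenerate F \<and> has_isotropic_subspace F 2"
    then obtain F :: "'k^(4 \<times> 4)" where F: "is_sym2 F" "dm D (tens A A) F = 0" "nondegenerate F"
      "has_isotropic_subspace F 2" using tA by metis
    obtain a b :: "'k^2^2" and P :: "'k^4^(2\<times>2)" and Q where
      ab: "trace a = 0" "trace b = 0" "P ** Q = mat 1" "Q ** P = mat 1" "P ** A = dmat D P + tens a b ** P"
      using converse[OF F] by blast
    have "diff_module D (dm D a)" "diff_module D (dm D b)" by (rule dm_diff_module)+
    moreover have "det_trivial D (dm D a)" "det_trivial D (dm D b)"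
      using ab(1,2) by (simp_all add: det_trivial_I conn_dm)
    moreover have "dmod_iso \<delta> (tensor_mod D (dm D a) (dm D b))"
      unfolding dA tensor_mod_eq conn_dm by (rule iso_I[OF ab(3,4,5)])
    ultimately show "\<exists>(\<delta>A :: 'k^2 \<Rightarrow> 'k^2) (\<delta>B :: 'k^2 \<Rightarrow> 'k^2).
            diff_module D \<delta>A \<and> diff_module D \<delta>B \<and> det_trivial D \<delta>A \<and> det_trivial D \<delta>B \<and>
            dmod_iso \<delta> (tensor_mod D \<delta>A \<delta>B)" by blast
  qed
qed

end
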